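(* Suppose a cube is inscribed in the unit sphere in $\mathbb{R}^3$ in such a way that two of its vertices lie at $(0,0,\pm1)$. Then the stereographic projection $S(x,y,z)=\frac{x}{1-z}+i\frac{y}{1-z}$ sends the remaining six vertices to the three vertices and the three midpoints of the sides of an equilateral triangle in $\mathbb{C}$. *)

theory Defs
  imports "HOL-Analysis.Analysis"
begin

definition cube_vertices :: "real^3 \<Rightarrow> real \<Rightarrow> real^3 \<Rightarrow> real^3 \<Rightarrow> real^3 \<Rightarrow> (real^3) set" where
  "cube_vertices c s u v w =
     {c + s *\<^sub>R (a *\<^sub>R u + b *\<^sub>R v + d *\<^sub>R w) | a b d.
        a \<in> {-1, 1} \<and> b \<in> {-1, 1} \<and> d \<in> {-1, 1}}"

definition is_cube :: "(real^3) set \<Rightarrow> bool" where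
  "is_cube V \<longleftrightarrow> (\<exists>c s u v w. s > 0 \<and> norm u = 1 \<and> norm v = 1 \<and> norm w = 1 \<and>
      inner u v = 0 \<and> inner v w = 0 \<and> inner u w = 0 \<and> V = cube_vertices c s u v w)"

definition stereo :: "real^3 \<Rightarrow> complex" where
  "stereo p = Complex (p$1 / (1 - p$3)) (p$2 / (1 - p$3))"

definition equilateral :: "complex \<Rightarrow> complex \<Rightarrow> complex \<Rightarrow> bool" where
  "equilateral a b c \<longleftrightarrow> a \<noteq> b \<and> dist a b = dist b c \<and> dist b c = dist c a"

end

theory Submission
  imports Defs
begin

lemma e3_inner: "inner (x::real^3) (vector [0,0,1]) = x$3"
  by (simp add: inner_vec_def sum_3)

lemma sq3: "inner (x::real^3) x = (x$1)^2 + (x$2)^2 + (x$3)^2"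
  by (simp add: inner_vec_def sum_3 power2_eq_square)

lemma core:
  fixes U V W :: "real^3" and s :: real
  assumes on: "inner U U = 1" "inner V V = 1" "inner W W = 1"
    "inner U V = 0" "inner V W = 0" "inner U W = 0"
    and s3: "s^2 = 1/3"
    and N: "s *\<^sub>R (U + V + W) = vector [0,0,1]"
  defines "p1 \<equiv> s *\<^sub>R (-U + V + W)" and "p2 \<equiv> s *\<^sub>R (U - V + W)" and "p3 \<equiv> s *\<^sub>R (U + V - W)"
  shows "\<exists>a b c. equilateral a b c \<and>
           stereo ` {p1, p2, p3, -p1, -p2, -p3} = {a, b, c, (a + b) / 2, (b + c) / 2, (c + a) / 2}"
proof -
  have iVU: "inner V U = 0" "inner W V = 0" "inner W U = 0" using on by (simp_all add: inner_commute)
  have z: "p1$3 = 1/3" "p2$3 = 1/3" "p3$3 = 1/3"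
  proof -
    have "p1$3 = inner p1 (s *\<^sub>R (U + V + W))" by (simp add: N e3_inner)
    also have "\<dots> = s^2" unfolding p1_def using on iVU
      by (simp add: inner_add_left inner_add_right inner_diff_left inner_diff_right power2_eq_square)
    finally show "p1$3 = 1/3" using s3 by simp
    have "p2$3 = inner p2 (s *\<^sub>R (U + V + W))" by (simp add: N e3_inner)
    also have "\<dots> = s^2" unfolding p2_def using on iVU
      by (simp add: inner_add_left inner_add_right inner_diff_left inner_diff_right power2_eq_square)
    finally show "p2$3 = 1/3" using s3 by simp
    have "p3$3 = inner p3 (s *\<^sub>R (U + V + W))" by (simp add: N e3_inner)
    also have "\<dots> = s^2" unfolding p3_def using on iVU
      by (simp add: inner_add_left inner_add_right inner_diff_left inner_diff_right power2_eq_square)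
    finally show "p3$3 = 1/3" using s3 by simp
  qed
  have sum: "p1 + p2 + p3 = vector [0,0,1]"
    unfolding N[symmetric] p1_def p2_def p3_def by (simp add: algebra_simps)
  have sum1: "p1$1 + p2$1 + p3$1 = 0" and sum2: "p1$2 + p2$2 + p3$2 = 0"
    using arg_cong[OF sum, of "\<lambda>x. x$1"] arg_cong[OF sum, of "\<lambda>x. x$2"] by simp_all
  have e12: "p1 - p2 = (2 * s) *\<^sub>R (V - U)" and e23: "p2 - p3 = (2 * s) *\<^sub>R (W - V)"
    and e31: "p3 - p1 = (2 * s) *\<^sub>R (U - W)"
    unfolding p1_def p2_def p3_def by (simp_all add: vec_eq_iff algebra_simps)
  have d12: "inner (p1 - p2) (p1 - p2) = 8/3" and d23: "inner (p2 - p3) (p2 - p3) = 8/3"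
    and d31: "inner (p3 - p1) (p3 - p1) = 8/3"
    unfolding e12 e23 e31 using on iVU s3
    by (simp_all add: inner_diff_left inner_diff_right power2_eq_square)
  have h12: "(p1$1 - p2$1)^2 + (p1$2 - p2$2)^2 = 8/3" using d12 z by (simp add: sq3)
  have h23: "(p2$1 - p3$1)^2 + (p2$2 - p3$2)^2 = 8/3" using d23 z by (simp add: sq3)
  have h31: "(p3$1 - p1$1)^2 + (p3$2 - p1$2)^2 = 8/3" using d31 z by (simp add: sq3)
  define a where "a = Complex (3/2 * p1$1) (3/2 * p1$2)"
  define b where "b = Complex (3/2 * p2$1) (3/2 * p2$2)"
  define c where "c = Complex (3/2 * p3$1) (3/2 * p3$2)"
  have dist: "dist x y = sqrt 6" if "(x,y) \<in> {(a,b),(b,c),(c,a)}" for x y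
  proof -
    have "dist (Complex (3/2*x1) (3/2*y1)) (Complex (3/2*x2) (3/2*y2)) = sqrt 6"
      if "(x1 - x2)^2 + (y1 - y2)^2 = 8/3" for x1 y1 x2 y2 :: real
    proof -
      have "(3/2*x1 - 3/2*x2)^2 + (3/2*y1 - 3/2*y2)^2 = 9/4 * ((x1 - x2)^2 + (y1 - y2)^2)"
        by (simp add: power2_eq_square algebra_simps)
      also have "\<dots> = 6" using that by simp
      moreover have "Complex (3/2*x1) (3/2*y1) - Complex (3/2*x2) (3/2*y2) = Complex (3/2*x1 - 3/2*x2) (3/2*y1 - 3/2*y2)"
        by (simp add: complex_eq_iff)
      ultimately show ?thesis by (simp only: dist_norm complex_norm)
    qed
    then show ?thesis using that h12 h23 h31 unfolding a_def b_def c_def by auto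
  qed
  have eq: "equilateral a b c" unfolding equilateral_def
    using dist[of a b] dist[of b c] dist[of c a] by auto
  have st: "stereo p1 = a" "stereo p2 = b" "stereo p3 = c"
    unfolding stereo_def a_def b_def c_def z by (simp_all add: complex_eq_iff)
  have st2: "stereo (-p1) = (b + c) / 2" "stereo (-p2) = (c + a) / 2" "stereo (-p3) = (a + b) / 2"
    using sum1 sum2 unfolding stereo_def a_def b_def c_def
    by (simp_all add: z complex_eq_iff)
  have "stereo ` {p1, p2, p3, -p1, -p2, -p3} = {a, b, c, (a + b) / 2, (b + c) / 2, (c + a) / 2}"
    unfolding image_insert image_empty st st2 by auto
  then show ?thesis using eq by blast
qed

lemma zlem:
  fixes U V W :: "real^3" and s :: real
  assumes on: "inner U U = 1" "inner V V = 1" "inner W W = 1"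
    "inner U V = 0" "inner V W = 0" "inner U W = 0"
    and s3: "s^2 = 1/3"
    and N: "s *\<^sub>R (U + V + W) = vector [0,0,1]"
  shows "(s *\<^sub>R (-U + V + W))$3 = 1/3" "(s *\<^sub>R (U - V + W))$3 = 1/3" "(s *\<^sub>R (U + V - W))$3 = 1/3"
proof -
  have iVU: "inner V U = 0" "inner W V = 0" "inner W U = 0" using on by (simp_all add: inner_commute)
  have "(s *\<^sub>R (-U + V + W))$3 = inner (s *\<^sub>R (-U + V + W)) (s *\<^sub>R (U + V + W))" by (simp add: N e3_inner)
  also have "\<dots> = s^2" using on iVU
    by (simp add: inner_add_left inner_add_right inner_diff_left inner_diff_right power2_eq_square)
  finally show "(s *\<^sub>R (-U + V + W))$3 = 1/3" using s3 by simp
  have "(s *\<^sub>R (U - V + W))$3 = inner (s *\<^sub>R (U - V + W)) (s *\<^sub>R (U + V + W))" by (simp add: N e3_inner)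
  also have "\<dots> = s^2" using on iVU
    by (simp add: inner_add_left inner_add_right inner_diff_left inner_diff_right power2_eq_square)
  finally show "(s *\<^sub>R (U - V + W))$3 = 1/3" using s3 by simp
  have "(s *\<^sub>R (U + V - W))$3 = inner (s *\<^sub>R (U + V - W)) (s *\<^sub>R (U + V + W))" by (simp add: N e3_inner)
  also have "\<dots> = s^2" using on iVU
    by (simp add: inner_add_left inner_add_right inner_diff_left inner_diff_right power2_eq_square)
  finally show "(s *\<^sub>R (U + V - W))$3 = 1/3" using s3 by simp
qed

lemma sign_cases:
  fixes U V W :: "real^3" and s \<alpha> \<beta> \<gamma> :: real
  assumes "\<alpha> \<in> {-1,1}" "\<beta> \<in> {-1,1}" "\<gamma> \<in> {-1,1}"
  shows "s *\<^sub>R (\<alpha> *\<^sub>R U + \<beta> *\<^sub>R V + \<gamma> *\<^sub>R W) \<in>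
     {s *\<^sub>R (U + V + W), - (s *\<^sub>R (U + V + W)),
      s *\<^sub>R (-U + V + W), s *\<^sub>R (U - V + W), s *\<^sub>R (U + V - W),
      - (s *\<^sub>R (-U + V + W)), - (s *\<^sub>R (U - V + W)), - (s *\<^sub>R (U + V - W))}"
  using assms by (auto simp: vec_eq_iff algebra_simps)

lemma sign_flip:
  fixes u :: "real^3" and a a0 :: real
  assumes "a0 \<in> {-1,1}"
  shows "a *\<^sub>R u = (a * a0) *\<^sub>R (a0 *\<^sub>R u)"
  using assms by auto

theorem lemma3p8:
  fixes V :: "(real^3) set"
  assumes "is_cube V"
    and "V \<subseteq> sphere 0 1"
    and "vector [0, 0, 1] \<in> V"
    and "vector [0, 0, -1] \<in> V"
  shows "\<exists>a b c. equilateral a b c \<and>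
           stereo ` (V - {vector [0, 0, 1], vector [0, 0, -1]}) =
             {a, b, c, (a + b) / 2, (b + c) / 2, (c + a) / 2}"
proof -
  obtain c s u v w where s0: "s > 0" and nu: "norm u = 1" and nv: "norm v = 1" and nw: "norm w = 1"
    and o1: "inner u v = 0" and o2: "inner v w = 0" and o3: "inner u w = 0"
    and Vdef: "V = cube_vertices c s u v w"
    using assms(1) unfolding is_cube_def by blast
  have uu: "inner u u = 1" and vv: "inner v v = 1" and ww: "inner w w = 1"
    using nu nv nw by (simp_all flip: power2_norm_eq_inner)
  have o4: "inner v u = 0" "inner w v = 0" "inner w u = 0" using o1 o2 o3 by (simp_all add: inner_commute)
  have mem: "c + s *\<^sub>R (a *\<^sub>R u + b *\<^sub>R v + d *\<^sub>R w) \<in> V"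
    if "a \<in> {-1,1}" "b \<in> {-1,1}" "d \<in> {-1,1}" for a b d
    unfolding Vdef cube_vertices_def using that by blast
  have E: "inner c c + 2 * s * (a * inner c u + b * inner c v + d * inner c w) + s^2 * (a^2 + b^2 + d^2) = 1"
    if "a \<in> {-1,1}" "b \<in> {-1,1}" "d \<in> {-1,1}" for a b d
  proof -
    let ?x = "c + s *\<^sub>R (a *\<^sub>R u + b *\<^sub>R v + d *\<^sub>R w)"
    have "norm ?x = 1" using mem[OF that] assms(2) by auto
    then have "inner ?x ?x = 1" by (simp flip: power2_norm_eq_inner)
    moreover have "inner ?x ?x = inner c c + 2 * s * (a * inner c u + b * inner c v + d * inner c w) + s^2 * (a^2 + b^2 + d^2)"
    proof -
      define y where "y = a *\<^sub>R u + b *\<^sub>R v + d *\<^sub>R w"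
      have 1: "inner (c + s *\<^sub>R y) (c + s *\<^sub>R y) = inner c c + 2 * s * inner c y + s^2 * inner y y"
        by (simp add: inner_add_left inner_add_right inner_commute[of y c] power2_eq_square distrib_left)
      have 2: "inner c y = a * inner c u + b * inner c v + d * inner c w"
        unfolding y_def by (simp add: inner_add_right)
      have 3: "inner y y = a^2 + b^2 + d^2"
        unfolding y_def using uu vv ww o1 o2 o3 o4
        by (simp add: inner_add_left inner_add_right power2_eq_square)
      have 4: "inner (c + s *\<^sub>R y) (c + s *\<^sub>R y) = inner c c + 2 * s * (a * inner c u + b * inner c v + d * inner c w) + s^2 * (a^2 + b^2 + d^2)"
        using 1 unfolding 2 3 .
      show ?thesis using 4 unfolding y_def .
    qed
    ultimately show ?thesis by simp
  qed
  have "s * inner c u = 0" "s * inner c v = 0" "s * inner c w = 0"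
  proof -
    have "inner c c + 2 * s * (a * inner c u + b * inner c v + d * inner c w) + 3 * s^2 = 1"
      if "a \<in> {-1,1}" "b \<in> {-1,1}" "d \<in> {-1,1}" for a b d
      using E[OF that] that by auto
    then have L: "inner c c + 2 * (a * (s * inner c u)) + 2 * (b * (s * inner c v)) + 2 * (d * (s * inner c w)) + 3 * s^2 = 1"
      if "a \<in> {-1,1}" "b \<in> {-1,1}" "d \<in> {-1,1}" for a b d
      using that by (simp add: algebra_simps)
    have l1: "inner c c + 2 * (s * inner c u) + 2 * (s * inner c v) + 2 * (s * inner c w) + 3 * s^2 = 1"
      using L[of 1 1 1] by simp
    have l2: "inner c c - 2 * (s * inner c u) - 2 * (s * inner c v) - 2 * (s * inner c w) + 3 * s^2 = 1"
      using L[of "-1" "-1" "-1"] by simp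
    have l3: "inner c c + 2 * (s * inner c u) + 2 * (s * inner c v) - 2 * (s * inner c w) + 3 * s^2 = 1"
      using L[of 1 1 "-1"] by simp
    have l4: "inner c c + 2 * (s * inner c u) - 2 * (s * inner c v) + 2 * (s * inner c w) + 3 * s^2 = 1"
      using L[of 1 "-1" 1] by simp
    have l5: "inner c c - 2 * (s * inner c u) + 2 * (s * inner c v) + 2 * (s * inner c w) + 3 * s^2 = 1"
      using L[of "-1" 1 1] by simp
    show "s * inner c u = 0" "s * inner c v = 0" "s * inner c w = 0"
      using l1 l2 l3 l4 l5 by linarith+
  qed
  then have cu: "inner c u = 0" and cv: "inner c v = 0" and cw: "inner c w = 0" using s0 by simp_all
  have c0: "c = 0"
  proof (rule ccontr)
    assume "c \<noteq> 0"
    let ?S = "{u, v, w, c}"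
    have ne: "u \<noteq> v" "u \<noteq> w" "v \<noteq> w" "u \<noteq> c" "v \<noteq> c" "w \<noteq> c"
      using uu vv ww o1 o2 o3 cu cv cw by (auto simp: inner_commute)
    have "pairwise orthogonal ?S"
      using o1 o2 o3 o4 cu cv cw unfolding pairwise_def orthogonal_def by (auto simp: inner_commute)
    moreover have "0 \<notin> ?S" using uu vv ww \<open>c \<noteq> 0\<close> by auto
    ultimately have "independent ?S" by (rule pairwise_orthogonal_independent)
    then have "card ?S \<le> 3" using independent_bound by fastforce
    moreover have "card ?S = 4" using ne by simp
    ultimately show False by simp
  qed
  have s3: "s^2 = 1/3" using E[of 1 1 1] c0 by simp
  obtain a0 b0 d0 where a0: "a0 \<in> {-1,1}" and b0: "b0 \<in> {-1,1}" and d0: "d0 \<in> {-1,1}"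
    and Nd: "vector [0,0,1] = c + s *\<^sub>R (a0 *\<^sub>R u + b0 *\<^sub>R v + d0 *\<^sub>R w)"
    using assms(3) unfolding Vdef cube_vertices_def by blast
  define U where "U = a0 *\<^sub>R u"
  define V1 where "V1 = b0 *\<^sub>R v"
  define W where "W = d0 *\<^sub>R w"
  have on: "inner U U = 1" "inner V1 V1 = 1" "inner W W = 1"
    "inner U V1 = 0" "inner V1 W = 0" "inner U W = 0"
    using a0 b0 d0 uu vv ww o1 o2 o3 unfolding U_def V1_def W_def by auto
  have N: "s *\<^sub>R (U + V1 + W) = vector [0,0,1]" using Nd c0 unfolding U_def V1_def W_def by simp
  define N0 :: "real^3" where "N0 = vector [0,0,1]"
  have S: "vector [0,0,-1] = - N0" unfolding N0_def by (simp add: vec_eq_iff forall_3)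
  define p1 where "p1 = s *\<^sub>R (-U + V1 + W)"
  define p2 where "p2 = s *\<^sub>R (U - V1 + W)"
  define p3 where "p3 = s *\<^sub>R (U + V1 - W)"
  have z: "p1$3 = 1/3" "p2$3 = 1/3" "p3$3 = 1/3"
    using zlem[OF on s3 N] unfolding p1_def p2_def p3_def by simp_all
  have N3: "N0$3 = 1" unfolding N0_def by simp
  have set: "V - {N0, - N0} = {p1, p2, p3, -p1, -p2, -p3}"
  proof
    show "V - {N0, - N0} \<subseteq> {p1, p2, p3, -p1, -p2, -p3}"
    proof
      fix x assume x: "x \<in> V - {N0, - N0}"
      then obtain a b d where ab: "a \<in> {-1,1}" "b \<in> {-1,1}" "d \<in> {-1,1}"
        and xe: "x = c + s *\<^sub>R (a *\<^sub>R u + b *\<^sub>R v + d *\<^sub>R w)"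
        unfolding Vdef cube_vertices_def by blast
      have f: "a *\<^sub>R u = (a * a0) *\<^sub>R U" "b *\<^sub>R v = (b * b0) *\<^sub>R V1" "d *\<^sub>R w = (d * d0) *\<^sub>R W"
        unfolding U_def V1_def W_def using sign_flip[OF a0, of a u] sign_flip[OF b0, of b v] sign_flip[OF d0, of d w]
        by blast+
      have xe2: "x = s *\<^sub>R ((a * a0) *\<^sub>R U + (b * b0) *\<^sub>R V1 + (d * d0) *\<^sub>R W)"
        unfolding xe c0 f by simp
      have "a * a0 \<in> {-1,1}" "b * b0 \<in> {-1,1}" "d * d0 \<in> {-1,1}" using ab a0 b0 d0 by auto
      from sign_cases[OF this, of s U V1 W] x N show "x \<in> {p1, p2, p3, -p1, -p2, -p3}"
        unfolding xe2[symmetric] p1_def p2_def p3_def N0_def by auto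
    qed
  next
    have inV: "p1 \<in> V" "p2 \<in> V" "p3 \<in> V" "-p1 \<in> V" "-p2 \<in> V" "-p3 \<in> V"
    proof -
      have m: "s *\<^sub>R (a *\<^sub>R U + b *\<^sub>R V1 + d *\<^sub>R W) \<in> V"
        if "a \<in> {-1,1}" "b \<in> {-1,1}" "d \<in> {-1,1}" for a b d
      proof -
        have "a * a0 \<in> {-1,1}" "b * b0 \<in> {-1,1}" "d * d0 \<in> {-1,1}" using that a0 b0 d0 by auto
        from mem[OF this] show ?thesis unfolding c0 U_def V1_def W_def by simp
      qed
      show "p1 \<in> V" using m[of "-1" 1 1] unfolding p1_def by simp
      show "p2 \<in> V" using m[of 1 "-1" 1] unfolding p2_def by simp
      show "p3 \<in> V" using m[of 1 1 "-1"] unfolding p3_def by simp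
      show "-p1 \<in> V" using m[of 1 "-1" "-1"] unfolding p1_def by (simp add: vec_eq_iff algebra_simps)
      show "-p2 \<in> V" using m[of "-1" 1 "-1"] unfolding p2_def by (simp add: vec_eq_iff algebra_simps)
      show "-p3 \<in> V" using m[of "-1" "-1" 1] unfolding p3_def by (simp add: vec_eq_iff algebra_simps)
    qed
    show "{p1, p2, p3, -p1, -p2, -p3} \<subseteq> V - {N0, - N0}"
      using inV z N3 by auto
  qed
  obtain a b c' where "equilateral a b c'"
    "stereo ` {p1, p2, p3, -p1, -p2, -p3} = {a, b, c', (a + b) / 2, (b + c') / 2, (c' + a) / 2}"
    using core[OF on s3 N] unfolding p1_def p2_def p3_def by blast
  then show ?thesis unfolding S N0_def[symmetric] set by blast
qed

end
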